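(* There is an absolute constant $C$ such that the following holds. Let $0<\epsilon\le1$, let $X\subset\mathbb{R}^2$ be a finite set of points in general position, and let $A\subseteq X$ be an $\epsilon$-approximation for $X$ with respect to the ranges given by wedges (intersections of two closed halfplanes), with $|A|\ge\max(3,1/\epsilon)$. Then for every point $p\in\mathbb{R}^2$ such that $X\cup\{p\}$ is in general position, $|\mathrm{SD}_X(p)-\mathrm{SD}_A(p)|\le C\sqrt{\epsilon}$.
   Context: For a finite set $Y\subset\mathbb{R}^2$ with $|Y|\ge3$ and $p\in\mathbb{R}^2$, the simplicial depth $\mathrm{SD}_Y(p)$ is the fraction, among all $\binom{|Y|}{3}$ triangles formed by convex hulls of 3-element subsets of $Y$, of those triangles that contain $p$. For a finite set $X$ and a family $\mathcal{R}$ of subsets of the plane, $A\subseteq X$ is an $\epsilon$-approximation for $X$ with respect to $\mathcal{R}$ if $\left|\frac{|A\cap R|}{|A|}-\frac{|X\cap R|}{|X|}\right|\le\epsilon$ for every $R\in\mathcal{R}$. *)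

theory Defs
  imports "HOL-Analysis.Analysis"
begin

definition general_position :: "(real^2) set \<Rightarrow> bool" where
  "general_position S \<longleftrightarrow>
     (\<forall>a\<in>S. \<forall>b\<in>S. \<forall>c\<in>S. a \<noteq> b \<and> a \<noteq> c \<and> b \<noteq> c \<longrightarrow> \<not> collinear {a, b, c})"

definition closed_halfplane :: "(real^2) set \<Rightarrow> bool" where
  "closed_halfplane H \<longleftrightarrow> (\<exists>u b. u \<noteq> 0 \<and> H = {x. u \<bullet> x \<le> b})"

definition wedges :: "(real^2) set set" where
  "wedges = {H1 \<inter> H2 | H1 H2. closed_halfplane H1 \<and> closed_halfplane H2}"

definition eps_approximation ::
    "real \<Rightarrow> (real^2) set \<Rightarrow> (real^2) set \<Rightarrow> (real^2) set set \<Rightarrow> bool" where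
  "eps_approximation \<epsilon> X A \<R> \<longleftrightarrow> A \<subseteq> X \<and>
     (\<forall>R\<in>\<R>. \<bar>real (card (A \<inter> R)) / real (card A) - real (card (X \<inter> R)) / real (card X)\<bar> \<le> \<epsilon>)"

definition simplicial_depth :: "(real^2) set \<Rightarrow> real^2 \<Rightarrow> real" where
  "simplicial_depth Y p =
     real (card {T. T \<subseteq> Y \<and> card T = 3 \<and> p \<in> convex hull T}) / real (card Y choose 3)"

end

theory Submission
  imports Defs
begin

lemma vec2_eq: "(x::real^2) = y \<longleftrightarrow> x$1 = y$1 \<and> x$2 = y$2"
  by (simp add: vec_eq_iff forall_2)

lemma inner2: "(x::real^2) \<bullet> y = x$1 * y$1 + x$2 * y$2"
  by (simp add: inner_vec_def sum_2)

lemma wedge_rep: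
  fixes p b c :: "real^2"
  assumes nc: "\<not> collinear {p,b,c}"
  shows "\<exists>R\<in>wedges. \<forall>a. p \<in> convex hull {a,b,c} \<longleftrightarrow> a \<in> R"
proof -
  define u where "u = p - b"
  define v where "v = p - c"
  define d where "d = u$1 * v$2 - u$2 * v$1"
  have u0: "u \<noteq> 0" using nc unfolding u_def by (auto simp: collinear_2 insert_commute)
  have v0: "v \<noteq> 0" using nc unfolding v_def by (auto simp: collinear_2 insert_commute)
  have d0: "d \<noteq> 0"
  proof
    assume dz: "d = 0"
    have "collinear {0, u, u - v}"
    proof (cases "u$1 = 0")
      case True
      then have "u$2 \<noteq> 0" using u0 by (simp add: vec2_eq)
      then have "u - v = ((u$2 - v$2)/u$2) *\<^sub>R u" using True dz unfolding d_def
        by (simp add: vec2_eq field_simps)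
      then show ?thesis by (auto simp: collinear_lemma)
    next
      case False
      then have "u - v = ((u$1 - v$1)/u$1) *\<^sub>R u" using dz unfolding d_def
        by (simp add: vec2_eq field_simps)
      then show ?thesis by (auto simp: collinear_lemma)
    qed
    moreover have "u - v = c - b" unfolding u_def v_def by simp
    ultimately have "collinear {p,b,c}" using collinear_3[of p b c] unfolding u_def by simp
    then show False using nc by simp
  qed
  define s where "s x = ((x-p)$1 * v$2 - (x-p)$2 * v$1)/d" for x :: "real^2"
  define t where "t x = (u$1 * (x-p)$2 - u$2 * (x-p)$1)/d" for x :: "real^2"
  define w1 :: "real^2" where "w1 = vector [- v$2 / d, v$1 / d]"
  define w2 :: "real^2" where "w2 = vector [u$2 / d, - u$1 / d]"
  have w10: "w1 \<noteq> 0" using v0 d0 unfolding w1_def by (auto simp: vec2_eq)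
  have w20: "w2 \<noteq> 0" using u0 d0 unfolding w2_def by (auto simp: vec2_eq)
  have s_iff: "w1 \<bullet> x \<le> w1 \<bullet> p \<longleftrightarrow> 0 \<le> s x" for x
  proof -
    have "w1 \<bullet> x - w1 \<bullet> p = - s x" using d0 unfolding w1_def s_def inner2
      by (simp add: field_simps)
    then show ?thesis by linarith
  qed
  have t_iff: "w2 \<bullet> x \<le> w2 \<bullet> p \<longleftrightarrow> 0 \<le> t x" for x
  proof -
    have "w2 \<bullet> x - w2 \<bullet> p = - t x" using d0 unfolding w2_def t_def inner2
      by (simp add: field_simps)
    then show ?thesis by linarith
  qed
  define R where "R = {x. w1 \<bullet> x \<le> w1 \<bullet> p} \<inter> {x. w2 \<bullet> x \<le> w2 \<bullet> p}"
  have "R \<in> wedges" unfolding R_def wedges_def closed_halfplane_def using w10 w20 by blast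
  moreover have "p \<in> convex hull {a,b,c} \<longleftrightarrow> a \<in> R" for a
  proof
    assume "p \<in> convex hull {a,b,c}"
    then obtain l m n where lmn: "0 \<le> l" "0 \<le> m" "0 \<le> n" "l + m + n = 1"
      and pe: "p = l *\<^sub>R a + m *\<^sub>R b + n *\<^sub>R c"
      unfolding convex_hull_3 by blast
    have l0: "l \<noteq> 0"
    proof
      assume l: "l = 0"
      then have "n = 1 - m" using lmn by simp
      then have "p = m *\<^sub>R b + (1 - m) *\<^sub>R c" using pe l by simp
      then have "collinear {b,p,c}" by (auto simp: collinear_3_expand)
      then show False using nc by (simp add: insert_commute)
    qed
    have ai: "l * (a$i - p$i) = m * u$i + n * v$i" for i
    proof -
      have pi: "p$i = l * a$i + m * b$i + n * c$i" using pe by simp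
      have "m * u$i + n * v$i = (m + n) * p$i - (m * b$i + n * c$i)"
        unfolding u_def v_def by (simp add: algebra_simps)
      also have "... = (1 - l) * p$i - (p$i - l * a$i)" using lmn(4) pi by simp
      also have "... = l * (a$i - p$i)" by (simp add: algebra_simps)
      finally show ?thesis by simp
    qed
    have X1: "l * ((a-p)$1 * v$2 - (a-p)$2 * v$1) = m * d"
    proof -
      have "l * ((a-p)$1 * v$2 - (a-p)$2 * v$1) = (l * (a$1-p$1)) * v$2 - (l * (a$2-p$2)) * v$1"
        by (simp add: algebra_simps)
      also have "... = (m * u$1 + n * v$1) * v$2 - (m * u$2 + n * v$2) * v$1" by (simp only: ai)
      also have "... = m * d" by (simp add: d_def algebra_simps)
      finally show ?thesis .
    qed
    have X2: "l * (u$1 * (a-p)$2 - u$2 * (a-p)$1) = n * d"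
    proof -
      have "l * (u$1 * (a-p)$2 - u$2 * (a-p)$1) = u$1 * (l * (a$2-p$2)) - u$2 * (l * (a$1-p$1))"
        by (simp add: algebra_simps)
      also have "... = u$1 * (m * u$2 + n * v$2) - u$2 * (m * u$1 + n * v$1)" by (simp only: ai)
      also have "... = n * d" by (simp add: d_def algebra_simps)
      finally show ?thesis .
    qed
    have "s a = m / l" using X1 l0 d0 unfolding s_def by (simp add: field_simps)
    moreover have "t a = n / l" using X2 l0 d0 unfolding t_def by (simp add: field_simps)
    ultimately show "a \<in> R" unfolding R_def using s_iff t_iff lmn l0 by auto
  next
    assume "a \<in> R"
    then have st: "0 \<le> s a" "0 \<le> t a" unfolding R_def using s_iff t_iff by auto
    have ae: "a$i - p$i = s a * u$i + t a * v$i" for i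
    proof -
      have "d * (s a * u$1 + t a * v$1) = ((a-p)$1 * v$2 - (a-p)$2 * v$1) * u$1 + (u$1 * (a-p)$2 - u$2 * (a-p)$1) * v$1"
        using d0 unfolding s_def t_def by (simp add: field_simps)
      also have "... = d * (a$1 - p$1)" unfolding d_def by (simp add: algebra_simps)
      finally have 1: "a$1 - p$1 = s a * u$1 + t a * v$1" using d0 by simp
      have "d * (s a * u$2 + t a * v$2) = ((a-p)$1 * v$2 - (a-p)$2 * v$1) * u$2 + (u$1 * (a-p)$2 - u$2 * (a-p)$1) * v$2"
        using d0 unfolding s_def t_def by (simp add: field_simps)
      also have "... = d * (a$2 - p$2)" unfolding d_def by (simp add: algebra_simps)
      finally have 2: "a$2 - p$2 = s a * u$2 + t a * v$2" using d0 by simp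
      note 1 2
      then show ?thesis using exhaust_2[of i] by auto
    qed
    define k where "k = 1 + s a + t a"
    have k0: "k > 0" unfolding k_def using st by simp
    have "p = (1/k) *\<^sub>R a + (s a / k) *\<^sub>R b + (t a / k) *\<^sub>R c"
    proof -
      have kp: "k * p$i = a$i + s a * b$i + t a * c$i" for i
        using ae[of i] unfolding k_def u_def v_def by (simp add: algebra_simps)
      have "p$i = (1/k) * a$i + (s a / k) * b$i + (t a / k) * c$i" for i
      proof -
        have "p$i = (k * p$i) / k" using k0 by simp
        also have "... = (1/k) * a$i + (s a / k) * b$i + (t a / k) * c$i"
          unfolding kp by (simp add: add_divide_distrib)
        finally show ?thesis .
      qed
      then show ?thesis by (simp add: vec_eq_iff)
    qed
    moreover have "1/k + s a / k + t a / k = 1"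
    proof -
      have "1/k + s a / k + t a / k = (1 + s a + t a) / k" by (simp add: add_divide_distrib)
      then show ?thesis using k0 unfolding k_def by simp
    qed
    ultimately show "p \<in> convex hull {a,b,c}" unfolding convex_hull_3 using st k0
      by (intro CollectI exI[of _ "1/k"] exI[of _ "s a / k"] exI[of _ "t a / k"]) simp
  qed
  ultimately show ?thesis by blast
qed


lemma sum_ind_card:
  assumes "finite A"
  shows "(\<Sum>x\<in>A. if P x then 1 else (0::real)) = real (card {x\<in>A. P x})"
  using assms by (simp add: sum.inter_filter[symmetric])

lemma gp_subset: "general_position S \<Longrightarrow> T \<subseteq> S \<Longrightarrow> general_position T"
  unfolding general_position_def by blast

lemma seg_unique:
  fixes p b :: "real^2"
  assumes gp: "general_position (insert p X)" and bX: "b \<in> X" and bp: "b \<noteq> p"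
    and fin: "finite X"
  shows "card {a\<in>X. p \<in> convex hull {a,b,b}} \<le> 1"
proof -
  have "\<forall>a1\<in>{a\<in>X. p \<in> convex hull {a,b,b}}. \<forall>a2\<in>{a\<in>X. p \<in> convex hull {a,b,b}}. a1 = a2"
  proof (intro ballI, rule ccontr)
    fix a1 a2 assume a1: "a1 \<in> {a\<in>X. p \<in> convex hull {a,b,b}}"
      and a2: "a2 \<in> {a\<in>X. p \<in> convex hull {a,b,b}}" and ne: "a1 \<noteq> a2"
    have s1: "p \<in> closed_segment a1 b" using a1 by (simp add: segment_convex_hull)
    have s2: "p \<in> closed_segment a2 b" using a2 by (simp add: segment_convex_hull)
    have a1b: "a1 \<noteq> b" using s1 bp by auto
    have a2b: "a2 \<noteq> b" using s2 bp by auto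
    have c1: "collinear {a1,p,b}" using s1 by (simp add: between_mem_segment between_imp_collinear)
    have c2: "collinear {a2,p,b}" using s2 by (simp add: between_mem_segment between_imp_collinear)
    have c1': "collinear {a1,b,p}" using c1 by (simp add: insert_commute)
    have c2': "collinear {b,p,a2}" using c2 by (simp add: insert_commute)
    have "collinear {a1,b,a2}" using collinear_3_trans[OF c1' c2'] bp by blast
    moreover have "a1 \<in> insert p X" "a2 \<in> insert p X" "b \<in> insert p X" using a1 a2 bX by auto
    ultimately show False using gp ne a1b a2b unfolding general_position_def by metis
  qed
  then show ?thesis using fin card_le_Suc0_iff_eq[of "{a\<in>X. p \<in> convex hull {a,b,b}}"] by simp
qed

lemma key:
  fixes p :: "real^2"
  assumes fin: "finite X" and gp: "general_position (insert p X)"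
    and ea: "eps_approximation \<epsilon> X A wedges" and cA: "card A \<ge> 3"
    and eps: "real (card A) \<ge> 1 / \<epsilon>" "0 < \<epsilon>"
    and bX: "b \<in> X" and cX: "c \<in> X"
  shows "\<bar>real (card {a\<in>A. p \<in> convex hull {a,b,c}}) / real (card A)
          - real (card {a\<in>X. p \<in> convex hull {a,b,c}}) / real (card X)\<bar> \<le> \<epsilon>"
proof -
  have AX: "A \<subseteq> X" using ea unfolding eps_approximation_def by blast
  have finA: "finite A" using fin AX finite_subset by blast
  have cXA: "card A \<le> card X" using fin AX card_mono by blast
  have A0: "real (card A) > 0" using cA by simp
  have X0: "real (card X) > 0" using cA cXA by simp
  have iA: "1 / real (card A) \<le> \<epsilon>" using eps A0 by (simp add: field_simps)
  have iX: "1 / real (card X) \<le> \<epsilon>"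
  proof -
    have "1 / real (card X) \<le> 1 / real (card A)" using A0 cXA by (simp add: frac_le)
    then show ?thesis using iA by linarith
  qed
  consider "b = p \<or> c = p" | "b = c" "b \<noteq> p" | "b \<noteq> c" "b \<noteq> p" "c \<noteq> p" by blast
  then show ?thesis
  proof cases
    case 1
    then have "p \<in> convex hull {a,b,c}" for a by (auto intro: hull_inc)
    then show ?thesis using A0 X0 eps(2) by simp
  next
    case 2
    have X1: "card {a\<in>X. p \<in> convex hull {a,b,c}} \<le> 1"
      using seg_unique[OF gp bX 2(2) fin] 2(1) by simp
    have "card {a\<in>A. p \<in> convex hull {a,b,c}} \<le> card {a\<in>X. p \<in> convex hull {a,b,c}}"
      using fin AX by (intro card_mono) auto
    then have A1: "card {a\<in>A. p \<in> convex hull {a,b,c}} \<le> 1" using X1 by linarith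
    have fa: "real (card {a\<in>A. p \<in> convex hull {a,b,c}}) / real (card A) \<le> \<epsilon>"
    proof -
      have "real (card {a\<in>A. p \<in> convex hull {a,b,c}}) / real (card A) \<le> 1 / real (card A)"
        using A1 A0 by (intro divide_right_mono) auto
      then show ?thesis using iA by linarith
    qed
    have fx: "real (card {a\<in>X. p \<in> convex hull {a,b,c}}) / real (card X) \<le> \<epsilon>"
    proof -
      have "real (card {a\<in>X. p \<in> convex hull {a,b,c}}) / real (card X) \<le> 1 / real (card X)"
        using X1 X0 by (intro divide_right_mono) auto
      then show ?thesis using iX by linarith
    qed
    have "0 \<le> real (card {a\<in>A. p \<in> convex hull {a,b,c}}) / real (card A)" by simp
    moreover have "0 \<le> real (card {a\<in>X. p \<in> convex hull {a,b,c}}) / real (card X)" by simp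
    ultimately show ?thesis using fa fx by linarith
  next
    case 3
    have "\<not> collinear {p,b,c}"
      using gp 3 bX cX unfolding general_position_def by auto
    then obtain R where R: "R \<in> wedges" "\<And>a. p \<in> convex hull {a,b,c} \<longleftrightarrow> a \<in> R"
      using wedge_rep by blast
    have "{a\<in>A. p \<in> convex hull {a,b,c}} = A \<inter> R" "{a\<in>X. p \<in> convex hull {a,b,c}} = X \<inter> R"
      using R(2) by auto
    then show ?thesis using ea R(1) unfolding eps_approximation_def by simp
  qed
qed


definition ind :: "real^2 \<Rightarrow> real^2 \<Rightarrow> real^2 \<Rightarrow> real^2 \<Rightarrow> real" where
  "ind p a b c = (if p \<in> convex hull {a,b,c} then 1 else 0)"

definition E3 :: "real^2 \<Rightarrow> (real^2) set \<Rightarrow> (real^2) set \<Rightarrow> (real^2) set \<Rightarrow> real" where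
  "E3 p U V W = (\<Sum>a\<in>U. \<Sum>b\<in>V. \<Sum>c\<in>W. ind p a b c) / (real (card U) * real (card V) * real (card W))"

lemma ind12: "ind p a b c = ind p b a c" unfolding ind_def by (simp add: insert_commute)
lemma ind13: "ind p a b c = ind p c b a" unfolding ind_def by (simp add: insert_commute)

lemma E3_swap12: "E3 p U V W = E3 p V U W"
  unfolding E3_def by (subst sum.swap) (simp add: ind12 mult.commute mult.left_commute)

lemma E3_swap13: "E3 p U V W = E3 p W V U"
proof -
  have "(\<Sum>a\<in>U. \<Sum>b\<in>V. \<Sum>c\<in>W. ind p a b c) = (\<Sum>a\<in>U. \<Sum>c\<in>W. \<Sum>b\<in>V. ind p a b c)"
    by (simp add: sum.swap[of _ V W])
  also have "... = (\<Sum>c\<in>W. \<Sum>a\<in>U. \<Sum>b\<in>V. ind p a b c)" by (rule sum.swap)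
  also have "... = (\<Sum>c\<in>W. \<Sum>b\<in>V. \<Sum>a\<in>U. ind p a b c)" by (simp add: sum.swap[of _ U V])
  also have "... = (\<Sum>c\<in>W. \<Sum>b\<in>V. \<Sum>a\<in>U. ind p c b a)" by (simp add: ind13[of p _ _ _])
  finally show ?thesis unfolding E3_def by (simp add: mult.commute mult.left_commute)
qed

lemma E3_fiber:
  assumes "finite Y" "Y \<noteq> {}"
  shows "E3 p Y V W = (\<Sum>b\<in>V. \<Sum>c\<in>W. real (card {a\<in>Y. p \<in> convex hull {a,b,c}}) / real (card Y))
           / (real (card V) * real (card W))"
proof -
  have "(\<Sum>a\<in>Y. \<Sum>b\<in>V. \<Sum>c\<in>W. ind p a b c) = (\<Sum>b\<in>V. \<Sum>a\<in>Y. \<Sum>c\<in>W. ind p a b c)"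
    by (rule sum.swap)
  also have "... = (\<Sum>b\<in>V. \<Sum>c\<in>W. \<Sum>a\<in>Y. ind p a b c)" by (simp add: sum.swap[of _ Y W])
  also have "... = (\<Sum>b\<in>V. \<Sum>c\<in>W. real (card {a\<in>Y. p \<in> convex hull {a,b,c}}))"
    unfolding ind_def using assms(1) by (simp add: sum_ind_card)
  finally have e: "(\<Sum>a\<in>Y. \<Sum>b\<in>V. \<Sum>c\<in>W. ind p a b c) = (\<Sum>b\<in>V. \<Sum>c\<in>W. real (card {a\<in>Y. p \<in> convex hull {a,b,c}}))" .
  have cY: "real (card Y) > 0" using assms by (simp add: card_gt_0_iff)
  show ?thesis unfolding E3_def e
    using cY by (simp add: sum_divide_distrib[symmetric] field_simps)
qed

lemma L1:
  fixes p :: "real^2"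
  assumes fin: "finite X" and gp: "general_position (insert p X)"
    and ea: "eps_approximation \<epsilon> X A wedges" and cA: "card A \<ge> 3"
    and eps: "real (card A) \<ge> 1 / \<epsilon>" "0 < \<epsilon>"
    and V: "V \<subseteq> X" "V \<noteq> {}" and W: "W \<subseteq> X" "W \<noteq> {}"
  shows "\<bar>E3 p A V W - E3 p X V W\<bar> \<le> \<epsilon>"
proof -
  have AX: "A \<subseteq> X" using ea unfolding eps_approximation_def by blast
  have finA: "finite A" using fin AX finite_subset by blast
  have A0: "A \<noteq> {}" using cA by auto
  have X0: "X \<noteq> {}" using A0 AX by auto
  have fV: "finite V" "finite W" using V W fin finite_subset by auto
  have cV: "real (card V) > 0" "real (card W) > 0" using fV V W by (auto simp: card_gt_0_iff)
  define F where "F Y b c = real (card {a\<in>Y. p \<in> convex hull {a,b,c}}) / real (card Y)" for Y b c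
  have "E3 p A V W - E3 p X V W = (\<Sum>b\<in>V. \<Sum>c\<in>W. F A b c - F X b c) / (real (card V) * real (card W))"
    unfolding E3_fiber[OF finA A0] E3_fiber[OF fin X0] F_def
    by (simp add: sum_subtractf diff_divide_distrib)
  moreover have "\<bar>\<Sum>b\<in>V. \<Sum>c\<in>W. F A b c - F X b c\<bar> \<le> (\<Sum>b\<in>V. \<Sum>c\<in>W. \<epsilon>)"
  proof -
    have "\<bar>\<Sum>b\<in>V. \<Sum>c\<in>W. F A b c - F X b c\<bar> \<le> (\<Sum>b\<in>V. \<bar>\<Sum>c\<in>W. F A b c - F X b c\<bar>)"
      by (rule sum_abs)
    also have "... \<le> (\<Sum>b\<in>V. \<Sum>c\<in>W. \<bar>F A b c - F X b c\<bar>)"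
      by (intro sum_mono sum_abs)
    also have "... \<le> (\<Sum>b\<in>V. \<Sum>c\<in>W. \<epsilon>)"
      unfolding F_def using V W
      by (intro sum_mono key[OF fin gp ea cA eps]) auto
    finally show ?thesis .
  qed
  moreover have "(\<Sum>b\<in>V. \<Sum>c\<in>W. \<epsilon>) = \<epsilon> * (real (card V) * real (card W))" by simp
  ultimately have h1: "E3 p A V W - E3 p X V W = (\<Sum>b\<in>V. \<Sum>c\<in>W. F A b c - F X b c) / (real (card V) * real (card W))"
    and h2: "\<bar>\<Sum>b\<in>V. \<Sum>c\<in>W. F A b c - F X b c\<bar> \<le> \<epsilon> * (real (card V) * real (card W))" by metis+
  have Q: "real (card V) * real (card W) > 0" using cV by simp
  have "\<bar>E3 p A V W - E3 p X V W\<bar> = \<bar>\<Sum>b\<in>V. \<Sum>c\<in>W. F A b c - F X b c\<bar> / (real (card V) * real (card W))"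
    unfolding h1 using Q by (simp add: abs_divide)
  also have "... \<le> \<epsilon> * (real (card V) * real (card W)) / (real (card V) * real (card W))"
    using h2 Q by (intro divide_right_mono) auto
  also have "... = \<epsilon>" using Q by (metis nonzero_mult_div_cancel_right less_irrefl)
  finally show ?thesis .
qed


lemma choose3: "n \<ge> 3 \<Longrightarrow> 6 * (n choose 3) = n * (n - 1) * (n - 2)"
proof -
  assume "n \<ge> 3"
  then obtain m where n: "n = m + 3" by (metis add.commute le_iff_add)
  have "fact 3 * fact m * (n choose 3) = (fact n :: nat)"
    using binomial_fact_lemma[of 3 n] n by simp
  moreover have "(fact n :: nat) = (m+3) * (m+2) * (m+1) * fact m"
    unfolding n by (simp add: fact_Suc numeral_3_eq_3 numeral_2_eq_2 algebra_simps)
  moreover have "(fact 3 :: nat) = 6" by (simp add: fact_Suc numeral_3_eq_3)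
  ultimately have "6 * (n choose 3) * fact m = (m+3) * (m+2) * (m+1) * fact m"
    by (simp add: algebra_simps)
  then have "6 * (n choose 3) = (m+3) * (m+2) * (m+1)" by simp
  then show ?thesis unfolding n by simp
qed

lemma arith_L2:
  fixes n D B M :: real
  assumes n: "n \<ge> 3" and M: "M = n * (n - 1) * (n - 2)" and D: "0 \<le> D" "D \<le> M"
    and B: "0 \<le> B" "B \<le> 3 * n^2"
  shows "\<bar>D / M - (D + B) / n^3\<bar> \<le> 6 / n"
proof -
  have Mp: "M > 0" using n M by simp
  have n3: "n^3 > 0" using n by simp
  have diff: "n^3 - M = 3 * n^2 - 2 * n" unfolding M by (simp add: algebra_simps power2_eq_square power3_eq_cube)
  have "0 \<le> n * (3 * n - 2)" using n by simp
  then have "0 \<le> 3 * n^2 - 2 * n" by (simp add: algebra_simps power2_eq_square)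
  then have Mle: "M \<le> n^3" using diff by linarith
  have e1: "D / M - D / n^3 = (D / M) * ((n^3 - M) / n^3)" using Mp n3 by (simp add: field_simps)
  have q0: "0 \<le> (n^3 - M) / n^3" using Mle n3 by simp
  have q1: "(n^3 - M) / n^3 \<le> 3 / n"
  proof -
    have "(n^3 - M) / n^3 \<le> (3 * n^2) / n^3" using diff n n3 by (intro divide_right_mono) auto
    also have "... = 3 / n" using n by (simp add: power2_eq_square power3_eq_cube)
    finally show ?thesis .
  qed
  have dm: "D / M \<le> 1" "0 \<le> D / M" using D Mp by auto
  have a1: "0 \<le> D / M - D / n^3" unfolding e1 by (rule mult_nonneg_nonneg[OF dm(2) q0])
  have a2: "D / M - D / n^3 \<le> 3 / n"
  proof -
    have "(D / M) * ((n^3 - M) / n^3) \<le> 1 * (3 / n)" using dm q0 q1 by (intro mult_mono) auto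
    then show ?thesis using e1 by simp
  qed
  have b1: "0 \<le> B / n^3" using B n3 by simp
  have b2: "B / n^3 \<le> 3 / n"
  proof -
    have "B / n^3 \<le> (3 * n^2) / n^3" using B n3 by (intro divide_right_mono) auto
    also have "... = 3 / n" using n by (simp add: power2_eq_square power3_eq_cube)
    finally show ?thesis .
  qed
  have "D / M - (D + B) / n^3 = (D / M - D / n^3) - B / n^3" by (simp add: add_divide_distrib)
  then show ?thesis using a1 a2 b1 b2 n by (simp add: abs_le_iff)
qed


lemma fiber6:
  assumes "card T = 3"
  shows "card {t \<in> T \<times> T \<times> T. fst t \<noteq> fst (snd t) \<and> fst t \<noteq> snd (snd t) \<and> fst (snd t) \<noteq> snd (snd t)
               \<and> {fst t, fst (snd t), snd (snd t)} = T} = 6"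
proof -
  obtain x y z where T: "T = {x,y,z}" "x \<noteq> y" "y \<noteq> z" "x \<noteq> z" using assms card_3_iff by metis
  have "{t \<in> T \<times> T \<times> T. fst t \<noteq> fst (snd t) \<and> fst t \<noteq> snd (snd t) \<and> fst (snd t) \<noteq> snd (snd t)
               \<and> {fst t, fst (snd t), snd (snd t)} = T} = {(x,y,z),(x,z,y),(y,x,z),(y,z,x),(z,x,y),(z,y,x)}"
    (is "?A = ?B")
  proof
    show "?A \<subseteq> ?B"
    proof
      fix t assume t: "t \<in> ?A"
      obtain a b c where abc: "t = (a,b,c)" by (cases t) auto
      have "a \<in> {x,y,z}" "b \<in> {x,y,z}" "c \<in> {x,y,z}" "a \<noteq> b" "a \<noteq> c" "b \<noteq> c"
        using t abc T(1) by auto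
      then show "t \<in> ?B" unfolding abc by auto
    qed
  next
    show "?B \<subseteq> ?A" unfolding T(1) using T(2-4) by (simp add: insert_commute)
  qed
  then show ?thesis using T by simp
qed

lemma L2:
  fixes p :: "real^2"
  assumes fin: "finite Y" and cY: "card Y \<ge> 3"
  shows "\<bar>simplicial_depth Y p - E3 p Y Y Y\<bar> \<le> 6 / real (card Y)"
proof -
  define n where "n = card Y"
  define S where "S = Y \<times> Y \<times> Y"
  define I where "I t = (p \<in> convex hull {fst t, fst (snd t), snd (snd t)})" for t :: "(real^2) \<times> (real^2) \<times> (real^2)"
  define dst where "dst t = (fst t \<noteq> fst (snd t) \<and> fst t \<noteq> snd (snd t) \<and> fst (snd t) \<noteq> snd (snd t))"
    for t :: "(real^2) \<times> (real^2) \<times> (real^2)"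
  define P where "P = {t\<in>S. I t}"
  define Dist where "Dist = {t\<in>P. dst t}"
  define Tset where "Tset = {T. T \<subseteq> Y \<and> card T = 3 \<and> p \<in> convex hull T}"
  have finS: "finite S" unfolding S_def using fin by simp
  have finP: "finite P" unfolding P_def using finS by simp
  have finD: "finite Dist" unfolding Dist_def using finP by simp
  have finT: "finite Tset" unfolding Tset_def using fin by (rule rev_finite_subset[OF finite_Pow_iff[THEN iffD2]]) auto
  have sumP: "(\<Sum>a\<in>Y. \<Sum>b\<in>Y. \<Sum>c\<in>Y. ind p a b c) = real (card P)"
  proof -
    have "(\<Sum>a\<in>Y. \<Sum>b\<in>Y. \<Sum>c\<in>Y. ind p a b c) = (\<Sum>t\<in>S. if I t then 1 else 0)"
      unfolding S_def I_def ind_def by (simp add: sum.cartesian_product')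
    also have "... = real (card P)" unfolding P_def using finS by (rule sum_ind_card)
    finally show ?thesis .
  qed
  have DP: "Dist \<subseteq> P" unfolding Dist_def by auto
  have cardP: "card P = card Dist + card (P - Dist)"
    using card_Diff_subset[OF finD DP] card_mono[OF finP DP] by simp
  have bad: "card (P - Dist) \<le> 3 * n^2"
  proof -
    have "P - Dist \<subseteq> (\<lambda>(a,c). (a,a,c)) ` (Y \<times> Y) \<union> (\<lambda>(a,b). (a,b,a)) ` (Y \<times> Y) \<union> (\<lambda>(a,b). (a,b,b)) ` (Y \<times> Y)"
    proof
      fix t assume t: "t \<in> P - Dist"
      obtain a b c where abc: "t = (a,b,c)" by (cases t) auto
      have in3: "a \<in> Y" "b \<in> Y" "c \<in> Y" using t abc unfolding P_def S_def by auto
      have "a = b \<or> a = c \<or> b = c" using t abc unfolding P_def Dist_def dst_def by auto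
      then show "t \<in> (\<lambda>(a,c). (a,a,c)) ` (Y \<times> Y) \<union> (\<lambda>(a,b). (a,b,a)) ` (Y \<times> Y) \<union> (\<lambda>(a,b). (a,b,b)) ` (Y \<times> Y)"
      proof (elim disjE)
        assume "a = b" then have "t = (\<lambda>(a,c). (a,a,c)) (a,c)" using abc by simp
        then show ?thesis using in3 by blast
      next
        assume "a = c" then have "t = (\<lambda>(a,b). (a,b,a)) (a,b)" using abc by simp
        then show ?thesis using in3 by blast
      next
        assume "b = c" then have "t = (\<lambda>(a,b). (a,b,b)) (a,b)" using abc by simp
        then show ?thesis using in3 by blast
      qed
    qed
    then have "card (P - Dist) \<le> card ((\<lambda>(a,c). (a,a,c)) ` (Y \<times> Y) \<union> (\<lambda>(a,b). (a,b,a)) ` (Y \<times> Y) \<union> (\<lambda>(a,b). (a,b,b)) ` (Y \<times> Y))"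
      using fin by (intro card_mono) auto
    also have "... \<le> card ((\<lambda>(a,c). (a,a,c)) ` (Y \<times> Y)) + card ((\<lambda>(a,b). (a,b,a)) ` (Y \<times> Y)) + card ((\<lambda>(a,b). (a,b,b)) ` (Y \<times> Y))"
      by (meson add_le_mono card_Un_le le_trans order_refl)
    also have "... \<le> card (Y \<times> Y) + card (Y \<times> Y) + card (Y \<times> Y)"
      by (intro add_le_mono card_image_le) (auto simp: fin)
    also have "... = 3 * n^2" unfolding n_def by (simp add: card_cartesian_product power2_eq_square)
    finally show ?thesis .
  qed
  have cardD: "card Dist = 6 * card Tset"
  proof -
    define h where "h t = {fst t, fst (snd t), snd (snd t)}" for t :: "(real^2) \<times> (real^2) \<times> (real^2)"
    have img: "h ` Dist \<subseteq> Tset"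
    proof
      fix T assume "T \<in> h ` Dist"
      then obtain t where t: "t \<in> Dist" "T = h t" by blast
      have "card T = 3" using t unfolding h_def Dist_def dst_def by auto
      moreover have "T \<subseteq> Y" using t unfolding h_def Dist_def P_def S_def by auto
      moreover have "p \<in> convex hull T" using t unfolding h_def Dist_def P_def I_def by auto
      ultimately show "T \<in> Tset" unfolding Tset_def by blast
    qed
    have fib: "card {t\<in>Dist. h t = T} = 6" if T: "T \<in> Tset" for T
    proof -
      have "{t\<in>Dist. h t = T} = {t \<in> T \<times> T \<times> T. fst t \<noteq> fst (snd t) \<and> fst t \<noteq> snd (snd t) \<and> fst (snd t) \<noteq> snd (snd t)
               \<and> {fst t, fst (snd t), snd (snd t)} = T}"
      proof (rule set_eqI)
        fix t :: "(real^2) \<times> (real^2) \<times> (real^2)"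
        obtain a b c where abc: "t = (a,b,c)" by (cases t) auto
        have TY: "T \<subseteq> Y" "p \<in> convex hull T" using T unfolding Tset_def by auto
        show "t \<in> {t\<in>Dist. h t = T} \<longleftrightarrow> t \<in> {t \<in> T \<times> T \<times> T. fst t \<noteq> fst (snd t) \<and> fst t \<noteq> snd (snd t) \<and> fst (snd t) \<noteq> snd (snd t)
               \<and> {fst t, fst (snd t), snd (snd t)} = T}"
        proof
          assume "t \<in> {t\<in>Dist. h t = T}"
          then have "{a,b,c} = T" "a \<noteq> b" "a \<noteq> c" "b \<noteq> c"
            unfolding abc h_def Dist_def dst_def by auto
          then show "t \<in> {t \<in> T \<times> T \<times> T. fst t \<noteq> fst (snd t) \<and> fst t \<noteq> snd (snd t) \<and> fst (snd t) \<noteq> snd (snd t)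
               \<and> {fst t, fst (snd t), snd (snd t)} = T}" unfolding abc by auto
        next
          assume "t \<in> {t \<in> T \<times> T \<times> T. fst t \<noteq> fst (snd t) \<and> fst t \<noteq> snd (snd t) \<and> fst (snd t) \<noteq> snd (snd t)
               \<and> {fst t, fst (snd t), snd (snd t)} = T}"
          then have h: "{a,b,c} = T" "a \<noteq> b" "a \<noteq> c" "b \<noteq> c" "a \<in> T" "b \<in> T" "c \<in> T"
            unfolding abc by auto
          then show "t \<in> {t\<in>Dist. h t = T}"
            unfolding abc h_def Dist_def dst_def P_def S_def I_def using TY by auto
        qed
      qed
      moreover have c3: "card T = 3" using T unfolding Tset_def by simp
      ultimately show ?thesis using fiber6[OF c3] by simp
    qed
    have "card Dist = (\<Sum>t\<in>Dist. 1)" by simp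
    also have "... = (\<Sum>T\<in>Tset. \<Sum>t\<in>{t\<in>Dist. h t = T}. 1)"
      by (rule sum.group[OF finD finT img, symmetric])
    also have "... = (\<Sum>T\<in>Tset. 6)" using fib by simp
    also have "... = 6 * card Tset" by simp
    finally show ?thesis .
  qed
  have Tle: "card Tset \<le> n choose 3"
  proof -
    have "card Tset \<le> card {T. T \<subseteq> Y \<and> card T = 3}"
      using fin unfolding Tset_def by (intro card_mono) auto
    then show ?thesis using n_subsets[OF fin, of 3] unfolding n_def by simp
  qed
  have n3: "n \<ge> 3" using cY n_def by simp
  have ch: "6 * (n choose 3) = n * (n - 1) * (n - 2)" using choose3[OF n3] .
  have chr: "6 * real (n choose 3) = real n * (real n - 1) * (real n - 2)"
  proof -
    have "real (6 * (n choose 3)) = real (n * (n - 1) * (n - 2))" using ch by simp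
    then show ?thesis using n3 by (simp add: of_nat_diff)
  qed
  have SD: "simplicial_depth Y p = real (card Dist) / (real n * (real n - 1) * (real n - 2))"
    unfolding simplicial_depth_def Tset_def[symmetric] n_def[symmetric] cardD chr[symmetric] by simp
  have E: "E3 p Y Y Y = (real (card Dist) + real (card (P - Dist))) / (real n)^3"
    unfolding E3_def sumP n_def[symmetric] cardP by (simp add: power3_eq_cube)
  show ?thesis unfolding SD E n_def[symmetric]
  proof (rule arith_L2)
    show "3 \<le> real n" using n3 by simp
    show "0 \<le> real (card Dist)" by simp
    show "real (card Dist) \<le> real n * (real n - 1) * (real n - 2)"
      unfolding chr[symmetric] cardD using Tle by simp
    show "0 \<le> real (card (P - Dist))" by simp
    show "real (card (P - Dist)) \<le> 3 * (real n)^2" using bad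
      by (metis of_nat_le_iff of_nat_mult of_nat_numeral of_nat_power)
  qed simp
qed


theorem mainTheorem5:
  shows "\<exists>C::real. \<forall>(\<epsilon>::real) (X::(real^2) set) A (p::real^2).
     0 < \<epsilon> \<and> \<epsilon> \<le> 1 \<and> finite X \<and> general_position X \<and>
     eps_approximation \<epsilon> X A wedges \<and>
     card A \<ge> 3 \<and> real (card A) \<ge> 1 / \<epsilon> \<and>
     general_position (insert p X)
     \<longrightarrow> \<bar>simplicial_depth X p - simplicial_depth A p\<bar> \<le> C * sqrt \<epsilon>"
proof (intro exI[of _ 15] allI impI)
  fix \<epsilon> :: real and X A :: "(real^2) set" and p :: "real^2"
  assume h: "0 < \<epsilon> \<and> \<epsilon> \<le> 1 \<and> finite X \<and> general_position X \<and>
     eps_approximation \<epsilon> X A wedges \<and>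
     card A \<ge> 3 \<and> real (card A) \<ge> 1 / \<epsilon> \<and>
     general_position (insert p X)"
  then have e0: "0 < \<epsilon>" and e1: "\<epsilon> \<le> 1" and fin: "finite X"
    and ea: "eps_approximation \<epsilon> X A wedges" and cA: "card A \<ge> 3"
    and eA: "real (card A) \<ge> 1 / \<epsilon>" and gp: "general_position (insert p X)" by auto
  have AX: "A \<subseteq> X" using ea unfolding eps_approximation_def by blast
  have finA: "finite A" using fin AX finite_subset by blast
  have cXA: "card A \<le> card X" using fin AX card_mono by blast
  have A0: "real (card A) > 0" using cA by simp
  have Ane: "A \<noteq> {}" using cA by auto
  have Xne: "X \<noteq> {}" using Ane AX by auto
  have iA: "1 / real (card A) \<le> \<epsilon>" using eA A0 e0 by (simp add: field_simps)
  have iX: "1 / real (card X) \<le> \<epsilon>"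
  proof -
    have "1 / real (card X) \<le> 1 / real (card A)" using A0 cXA by (simp add: frac_le)
    then show ?thesis using iA by linarith
  qed
  have sX: "\<bar>simplicial_depth X p - E3 p X X X\<bar> \<le> 6 * \<epsilon>"
  proof -
    have "6 / real (card X) \<le> 6 * \<epsilon>" using iX by simp
    then show ?thesis using L2[OF fin, of p] cA cXA by linarith
  qed
  have sA: "\<bar>simplicial_depth A p - E3 p A A A\<bar> \<le> 6 * \<epsilon>"
  proof -
    have "6 / real (card A) \<le> 6 * \<epsilon>" using iA by simp
    then show ?thesis using L2[OF finA cA, of p] by linarith
  qed
  have l1: "\<bar>E3 p A A A - E3 p X A A\<bar> \<le> \<epsilon>"
    using L1[OF fin gp ea cA eA e0] AX Ane by blast
  have l2: "\<bar>E3 p A X A - E3 p X X A\<bar> \<le> \<epsilon>"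
    using L1[OF fin gp ea cA eA e0] AX Ane Xne by blast
  have l3: "\<bar>E3 p A X X - E3 p X X X\<bar> \<le> \<epsilon>"
    using L1[OF fin gp ea cA eA e0] Xne by blast
  have s1: "E3 p X A A = E3 p A X A" by (rule E3_swap12)
  have s2: "E3 p X X A = E3 p A X X" by (rule E3_swap13)
  have "\<bar>simplicial_depth X p - simplicial_depth A p\<bar> \<le> 15 * \<epsilon>"
    using sX sA l1 l2 l3 s1 s2 by linarith
  also have "15 * \<epsilon> \<le> 15 * sqrt \<epsilon>"
  proof -
    have "\<epsilon> = sqrt \<epsilon> * sqrt \<epsilon>" using e0 by simp
    moreover have "sqrt \<epsilon> \<le> 1" using e1 by simp
    moreover have "0 \<le> sqrt \<epsilon>" using e0 by simp
    ultimately have "\<epsilon> \<le> sqrt \<epsilon>" by (metis mult_left_le mult.commute)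
    then show ?thesis by simp
  qed
  finally show "\<bar>simplicial_depth X p - simplicial_depth A p\<bar> \<le> 15 * sqrt \<epsilon>" .
qed

end
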